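(* Let $(X,d)$ be a complete separable metric space and $(\xi_k)_{k=1}^n$ a stochastic process with state space $X$, initial law $P^{(1)}$ and conditional laws $p_k(\cdot\mid x^{(k-1)})$. Suppose there exist $\kappa_1>0$, $M>0$ and $0\le\rho_j\le M$ ($j=1,\dots,n$) such that: (i) $P^{(1)}$ and $p_k(\cdot\mid x^{(k-1)})$ ($k=2,\dots,n$, $x^{(k-1)}\in X^{k-1}$) satisfy $GC(\kappa_1)$ on $(X,d)$; (ii) for $k=2,\dots,n$ and all $x^{(k-1)},y^{(k-1)}$: $W_1\bigl(p_k(\cdot\mid x^{(k-1)}),p_k(\cdot\mid y^{(k-1)})\bigr)\le\sum_{j=1}^{k-1}\rho_{k-j}\,d(x_j,y_j)$. Then $P^{(n)}$ satisfies $GC(\kappa_n)$ on $(X^n,d^{(1)})$ with $\kappa_n=\kappa_1(1+M)^{2n}/M^2$. If moreover (iii) $\sum_{j=1}^n\rho_j\le R$, then $P^{(n)}$ satisfies $GC(\kappa_n(R))$ on $(X^n,d^{(1)})$ with $$\kappa_n(R)=\kappa_1\sum_{m=1}^n\Bigl(\sum_{k=0}^{m-1}R^k\Bigr)^2.$$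
   Context: $GC(\kappa)$ for $\mu$ on a metric space $(Y,\delta)$: $\int e^{tF}d\mu\le\exp(t\int Fd\mu+\kappa t^2/2)$ for all $t\in\mathbb R$ and all $1$-Lipschitz $F:(Y,\delta)\to\mathbb R$. $W_1(\mu,\nu)=\inf_\pi\iint d(x,y)\pi(dx\,dy)$ over couplings. $d^{(1)}(x^{(n)},y^{(n)})=\sum_{j=1}^nd(x_j,y_j)$. Joint law $P^{(n)}(dx^{(n)})=p_n(dx_n\mid x^{(n-1)})\cdots p_2(dx_2\mid x_1)P^{(1)}(dx_1)$. *)

theory Defs
  imports "HOL-Probability.Probability"
begin

definition GC :: "real \<Rightarrow> 'b measure \<Rightarrow> ('b \<Rightarrow> 'b \<Rightarrow> real) \<Rightarrow> bool" where
  "GC \<kappa> \<mu> \<delta> \<longleftrightarrow>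
     (\<forall>F. F \<in> borel_measurable \<mu> \<and> (\<forall>x\<in>space \<mu>. \<forall>y\<in>space \<mu>. \<bar>F x - F y\<bar> \<le> \<delta> x y) \<longrightarrow>
        integrable \<mu> F \<and>
        (\<forall>t::real. (\<integral>\<^sup>+ x. ennreal (exp (t * F x)) \<partial>\<mu>)
                     \<le> ennreal (exp (t * (\<integral>x. F x \<partial>\<mu>) + \<kappa> * t\<^sup>2 / 2))))"

definition couplings :: "'a::metric_space measure \<Rightarrow> 'a measure \<Rightarrow> ('a \<times> 'a) measure set" where
  "couplings \<mu> \<nu> = {\<pi>. sets \<pi> = sets borel \<and> prob_space \<pi> \<and>
                        distr \<pi> borel fst = \<mu> \<and> distr \<pi> borel snd = \<nu>}"

definition W1 :: "'a::metric_space measure \<Rightarrow> 'a measure \<Rightarrow> ennreal" where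
  "W1 \<mu> \<nu> = (INF \<pi> \<in> couplings \<mu> \<nu>. \<integral>\<^sup>+ z. ennreal (dist (fst z) (snd z)) \<partial>\<pi>)"

text \<open>Points of X^k are functions on the index set {1..k} (extensional);
  the product space carries the product sigma-algebra.\<close>
abbreviation Xpow :: "nat \<Rightarrow> (nat \<Rightarrow> 'a::topological_space) measure" where
  "Xpow k \<equiv> PiM {1..k} (\<lambda>_. borel)"

definition d1 :: "nat \<Rightarrow> (nat \<Rightarrow> 'a::metric_space) \<Rightarrow> (nat \<Rightarrow> 'a) \<Rightarrow> real" where
  "d1 n x y = (\<Sum>j=1..n. dist (x j) (y j))"

text \<open>Joint law P^(n)(dx^(n)) = p_n(dx_n | x^(n-1)) ... p_2(dx_2 | x_1) P^(1)(dx_1).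
  p k x is the conditional law of the k-th coordinate given x = x^(k-1).\<close>
fun joint :: "'a::topological_space measure \<Rightarrow> (nat \<Rightarrow> (nat \<Rightarrow> 'a) \<Rightarrow> 'a measure) \<Rightarrow> nat
                \<Rightarrow> (nat \<Rightarrow> 'a) measure" where
  "joint P1 p 0 = Xpow 0"
| "joint P1 p (Suc 0) = distr P1 (Xpow (Suc 0)) (\<lambda>a. \<lambda>i\<in>{1..Suc 0}. a)"
| "joint P1 p (Suc (Suc k)) =
     joint P1 p (Suc k) \<bind>
       (\<lambda>x. distr (p (Suc (Suc k)) x) (Xpow (Suc (Suc k))) (\<lambda>a. x(Suc (Suc k) := a)))"

end

theory Submission
  imports Defs "HOL-Probability.Probability"
begin

fun Phi :: "(nat \<Rightarrow> real) \<Rightarrow> nat \<Rightarrow> (nat \<Rightarrow> real) \<Rightarrow> real" where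
  "Phi \<rho> 0 a = 0"
| "Phi \<rho> (Suc m) a = (a (Suc m))\<^sup>2 + Phi \<rho> m (\<lambda>j. a j + a (Suc m) * \<rho> (Suc m - j))"

lemma Phi_unif:
  fixes M :: real
  assumes "M \<ge> 0"
  shows "(\<forall>j\<in>{1..m}. 0 \<le> \<rho> j \<and> \<rho> j \<le> M) \<Longrightarrow> c \<ge> 0 \<Longrightarrow> (\<forall>j\<in>{1..m}. 0 \<le> a j \<and> a j \<le> c)
     \<Longrightarrow> Phi \<rho> m a \<le> c\<^sup>2 * (\<Sum>i<m. (1+M)^(2*i))"
proof (induction m arbitrary: a c)
  case 0
  then show ?case by simp
next
  case (Suc m)
  define a' where "a' = (\<lambda>j. a j + a (Suc m) * \<rho> (Suc m - j))"
  have am: "0 \<le> a (Suc m)" "a (Suc m) \<le> c" using Suc.prems by auto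
  have "\<forall>j\<in>{1..m}. 0 \<le> a' j \<and> a' j \<le> c * (1+M)"
  proof
    fix j assume j: "j \<in> {1..m}"
    then have r: "0 \<le> \<rho> (Suc m - j)" "\<rho> (Suc m - j) \<le> M" using Suc.prems(1) by auto
    have aj: "0 \<le> a j" "a j \<le> c" using Suc.prems(3) j by auto
    have "a (Suc m) * \<rho> (Suc m - j) \<le> c * M"
      using am r by (intro mult_mono) auto
    then show "0 \<le> a' j \<and> a' j \<le> c * (1+M)" unfolding a'_def
      using aj am r by (auto simp: algebra_simps)
  qed
  moreover have "c * (1+M) \<ge> 0" using Suc.prems assms by auto
  ultimately have IH: "Phi \<rho> m a' \<le> (c * (1+M))\<^sup>2 * (\<Sum>i<m. (1+M)^(2*i))"
    using Suc.IH[of c' a' for c'] Suc.prems(1) by auto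
  have sq: "(a (Suc m))\<^sup>2 \<le> c\<^sup>2" using am by (simp add: power_mono)
  have sumeq: "(\<Sum>i<Suc m. (1+M)^(2*i)) = 1 + (1+M)^2 * (\<Sum>i<m. (1+M)^(2*i))"
  proof -
    have e: "\<And>i. (1+M)^(2*Suc i) = (1+M)^2 * (1+M)^(2*i)" by (simp add: mult_Suc_right power_add power2_eq_square)
    show ?thesis by (simp only: sum.lessThan_Suc_shift e) (simp add: sum_distrib_left)
  qed
  have eq2: "(c * (1+M))\<^sup>2 * (\<Sum>i<m. (1+M)^(2*i)) = c\<^sup>2 * ((1+M)\<^sup>2 * (\<Sum>i<m. (1+M)^(2*i)))"
    by (simp add: power_mult_distrib)
  have "Phi \<rho> (Suc m) a = (a (Suc m))\<^sup>2 + Phi \<rho> m a'" by (simp add: a'_def)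
  also have "\<dots> \<le> c\<^sup>2 + c\<^sup>2 * ((1+M)\<^sup>2 * (\<Sum>i<m. (1+M)^(2*i)))" using IH sq eq2 by linarith
  also have "\<dots> = c\<^sup>2 * (\<Sum>i<Suc m. (1+M)^(2*i))" unfolding sumeq by (simp add: distrib_left)
  finally show ?case .
qed

lemma geom_bound:
  fixes M :: real assumes "M > 0"
  shows "M\<^sup>2 * (\<Sum>i<n. (1+M)^(2*i)) \<le> (1+M)^(2*n) - 1"
proof (induction n)
  case 0 then show ?case by simp
next
  case (Suc n)
  have q: "(1+M)^(2*Suc n) = (1+M)^(2*n) * (1 + 2*M + M^2)"
    by (simp add: power_add power2_eq_square algebra_simps)
  have "0 \<le> (1+M)^(2*n) * (2*M)" using assms by simp
  have "M\<^sup>2 * (\<Sum>i<Suc n. (1+M)^(2*i)) = M\<^sup>2 * (\<Sum>i<n. (1+M)^(2*i)) + M\<^sup>2 * (1+M)^(2*n)"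
    by (simp add: algebra_simps)
  also have "\<dots> \<le> (1+M)^(2*n) - 1 + M\<^sup>2 * (1+M)^(2*n)" using Suc by simp
  also have "\<dots> \<le> (1+M)^(2*Suc n) - 1" unfolding q using \<open>0 \<le> (1+M)^(2*n) * (2*M)\<close>
    by (simp add: algebra_simps)
  finally show ?case .
qed

lemma Phi_R:
  fixes R :: real
  assumes rho: "\<forall>j\<in>{1..N}. 0 \<le> \<rho> j" and R: "(\<Sum>j=1..N. \<rho> j) \<le> R"
  defines "c \<equiv> (\<lambda>k. \<Sum>i=0..N-k. R^i)"
  shows "m \<le> N \<Longrightarrow> (\<forall>j\<in>{1..m}. 0 \<le> a j \<and> a j \<le> 1 + c (Suc m) * (\<Sum>l=Suc m-j..N-j. \<rho> l))
     \<Longrightarrow> Phi \<rho> m a \<le> (\<Sum>k=1..m. (c k)\<^sup>2)"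
proof (induction m arbitrary: a)
  case 0 then show ?case by simp
next
  case (Suc m)
  have R0: "0 \<le> R" using R rho by (meson order.trans sum_nonneg)
  have cpos: "\<And>k. 1 \<le> c k"
  proof -
    fix k
    have "{0..N-k} = insert 0 {1..N-k}" by auto
    then have "c k = 1 + (\<Sum>i=1..N-k. R^i)" unfolding c_def by simp
    moreover have "0 \<le> (\<Sum>i=1..N-k. R^i)" using R0 by (intro sum_nonneg) auto
    ultimately show "1 \<le> c k" by simp
  qed
  have cmono: "c (Suc (Suc m)) \<le> c (Suc m)" unfolding c_def using R0
    by (intro sum_mono2) auto
  define a' where "a' = (\<lambda>j. a j + a (Suc m) * \<rho> (Suc m - j))"
  have am0: "0 \<le> a (Suc m)" using Suc.prems by auto
  have am1: "a (Suc m) \<le> 1 + c (Suc (Suc m)) * (\<Sum>l=1..N-Suc m. \<rho> l)"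
    using Suc.prems(2)[rule_format, of "Suc m"] by simp
  have amc: "a (Suc m) \<le> c (Suc m)"
  proof (cases "N - Suc m = 0")
    case True
    then show ?thesis using am1 cpos[of "Suc m"] by simp
  next
    case False
    have "(\<Sum>l=1..N-Suc m. \<rho> l) \<le> (\<Sum>l=1..N. \<rho> l)"
      using rho by (intro sum_mono2) auto
    then have "(\<Sum>l=1..N-Suc m. \<rho> l) \<le> R" using R by linarith
    then have "c (Suc (Suc m)) * (\<Sum>l=1..N-Suc m. \<rho> l) \<le> c (Suc (Suc m)) * R"
      using cpos[of "Suc (Suc m)"] by (intro mult_left_mono) auto
    moreover have "c (Suc m) = 1 + R * c (Suc (Suc m))"
    proof -
      have e: "N - Suc m = Suc (N - Suc (Suc m))" using False by simp
      show ?thesis unfolding c_def e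
        by (simp only: sum.atLeast0_atMost_Suc_shift) (simp add: sum_distrib_left)
    qed
    ultimately show ?thesis using am1 by (simp add: algebra_simps)
  qed
  have "\<forall>j\<in>{1..m}. 0 \<le> a' j \<and> a' j \<le> 1 + c (Suc m) * (\<Sum>l=Suc m-j..N-j. \<rho> l)"
  proof
    fix j assume j: "j \<in> {1..m}"
    have "Suc m - j \<in> {1..N}" using j Suc.prems(1) by auto
    then have r: "0 \<le> \<rho> (Suc m - j)" using rho by blast
    have aj: "0 \<le> a j" "a j \<le> 1 + c (Suc (Suc m)) * (\<Sum>l=Suc (Suc m)-j..N-j. \<rho> l)"
      using Suc.prems(2) j by auto
    have spl: "(\<Sum>l=Suc m-j..N-j. \<rho> l) = \<rho> (Suc m - j) + (\<Sum>l=Suc (Suc m)-j..N-j. \<rho> l)"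
    proof -
      have "{Suc m-j..N-j} = insert (Suc m - j) {Suc (Suc m)-j..N-j}"
        using j Suc.prems(1) by auto
      moreover have "Suc m - j \<notin> {Suc (Suc m)-j..N-j}" using j by auto
      ultimately show ?thesis by simp
    qed
    have s0: "0 \<le> (\<Sum>l=Suc (Suc m)-j..N-j. \<rho> l)"
    proof (intro sum_nonneg)
      fix x assume "x \<in> {Suc (Suc m)-j..N-j}"
      then have "x \<in> {1..N}" using j by auto
      then show "0 \<le> \<rho> x" using rho by blast
    qed
    have t1: "c (Suc (Suc m)) * (\<Sum>l=Suc (Suc m)-j..N-j. \<rho> l) \<le> c (Suc m) * (\<Sum>l=Suc (Suc m)-j..N-j. \<rho> l)"
      using cmono s0 by (intro mult_right_mono) auto
    have t2: "a (Suc m) * \<rho> (Suc m - j) \<le> c (Suc m) * \<rho> (Suc m - j)"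
      using amc r by (intro mult_right_mono) auto
    show "0 \<le> a' j \<and> a' j \<le> 1 + c (Suc m) * (\<Sum>l=Suc m-j..N-j. \<rho> l)"
      unfolding a'_def spl using aj t1 t2 am0 r by (auto simp: algebra_simps)
  qed
  then have IH: "Phi \<rho> m a' \<le> (\<Sum>k=1..m. (c k)\<^sup>2)" using Suc.IH Suc.prems(1) by auto
  have sq: "(a (Suc m))\<^sup>2 \<le> (c (Suc m))\<^sup>2" using am0 amc by (simp add: power_mono)
  have "Phi \<rho> (Suc m) a = (a (Suc m))\<^sup>2 + Phi \<rho> m a'" by (simp add: a'_def)
  then show ?case using IH sq by simp
qed

lemma GC_scaled:
  fixes \<mu> :: "'a::metric_space measure"
  assumes GC: "GC \<kappa> \<mu> dist" and ps: "prob_space \<mu>" and f: "f \<in> borel_measurable \<mu>" and L: "L \<ge> 0"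
    and lip: "\<forall>x\<in>space \<mu>. \<forall>y\<in>space \<mu>. \<bar>f x - f y\<bar> \<le> L * dist x y"
  shows "integrable \<mu> f \<and> (\<forall>t. (\<integral>\<^sup>+x. ennreal (exp (t * f x)) \<partial>\<mu>)
            \<le> ennreal (exp (t * (\<integral>x. f x \<partial>\<mu>) + \<kappa> * L\<^sup>2 * t\<^sup>2 / 2)))"
proof (cases "L = 0")
  case True
  have lip1: "\<forall>x\<in>space \<mu>. \<forall>y\<in>space \<mu>. \<bar>f x - f y\<bar> \<le> dist x y"
  proof (intro ballI)
    fix x y assume "x \<in> space \<mu>" "y \<in> space \<mu>"
    then have "\<bar>f x - f y\<bar> \<le> L * dist x y" using lip by blast
    then have "\<bar>f x - f y\<bar> \<le> 0" using True by simp
    then show "\<bar>f x - f y\<bar> \<le> dist x y" by (meson order.trans zero_le_dist)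
  qed
  have int: "integrable \<mu> f" using GC[unfolded GC_def, rule_format, OF conjI[OF f lip1]] by (rule conjunct1)
  obtain x0 where x0: "x0 \<in> space \<mu>" using prob_space.not_empty[OF ps] by blast
  have fc: "f x = f x0" if x: "x \<in> space \<mu>" for x
  proof -
    have "\<bar>f x - f x0\<bar> \<le> L * dist x x0" using lip x x0 by blast
    then show ?thesis using True by simp
  qed
  have I: "(\<integral>x. f x \<partial>\<mu>) = f x0"
  proof -
    have "(\<integral>x. f x \<partial>\<mu>) = (\<integral>x. f x0 \<partial>\<mu>)" by (rule Bochner_Integration.integral_cong) (use fc in blast)+
    then show ?thesis using prob_space.prob_space[OF ps] by simp
  qed
  have N: "(\<integral>\<^sup>+x. ennreal (exp (t * f x)) \<partial>\<mu>) = ennreal (exp (t * f x0))" for t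
  proof -
    have "(\<integral>\<^sup>+x. ennreal (exp (t * f x)) \<partial>\<mu>) = (\<integral>\<^sup>+x. ennreal (exp (t * f x0)) \<partial>\<mu>)"
      by (rule nn_integral_cong) (metis fc)
    then show ?thesis using prob_space.emeasure_space_1[OF ps] by simp
  qed
  show ?thesis using int by (simp add: N I True)
next
  case False
  then have Lp: "L > 0" using L by simp
  define g where "g = (\<lambda>x. f x / L)"
  have gm: "g \<in> borel_measurable \<mu>" unfolding g_def using f by measurable
  have glip: "\<forall>x\<in>space \<mu>. \<forall>y\<in>space \<mu>. \<bar>g x - g y\<bar> \<le> dist x y"
  proof (intro ballI)
    fix x y assume "x \<in> space \<mu>" "y \<in> space \<mu>"
    then have "\<bar>f x - f y\<bar> \<le> L * dist x y" using lip by auto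
    moreover have "g x - g y = (f x - f y) / L" unfolding g_def by (simp add: diff_divide_distrib)
    then have "\<bar>g x - g y\<bar> = \<bar>f x - f y\<bar> / L" using Lp by (simp add: abs_divide)
    ultimately show "\<bar>g x - g y\<bar> \<le> dist x y" using Lp by (simp add: divide_le_eq mult_ac)
  qed
  have G: "integrable \<mu> g \<and> (\<forall>t. (\<integral>\<^sup>+x. ennreal (exp (t * g x)) \<partial>\<mu>)
                     \<le> ennreal (exp (t * (\<integral>x. g x \<partial>\<mu>) + \<kappa> * t\<^sup>2 / 2)))"
    using GC[unfolded GC_def, rule_format, OF conjI[OF gm glip]] .
  have fg: "f = (\<lambda>x. L * g x)" unfolding g_def using Lp by auto
  have int: "integrable \<mu> f" unfolding fg using G by simp
  have Ig: "(\<integral>x. g x \<partial>\<mu>) = (\<integral>x. f x \<partial>\<mu>) / L" unfolding g_def by simp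
  show ?thesis
  proof (intro conjI allI int)
    fix t
    have "(\<integral>\<^sup>+x. ennreal (exp (t * f x)) \<partial>\<mu>) = (\<integral>\<^sup>+x. ennreal (exp ((t * L) * g x)) \<partial>\<mu>)"
      unfolding g_def using Lp by simp
    also have "\<dots> \<le> ennreal (exp ((t * L) * (\<integral>x. g x \<partial>\<mu>) + \<kappa> * (t * L)\<^sup>2 / 2))"
      using G by blast
    also have "(t * L) * (\<integral>x. g x \<partial>\<mu>) + \<kappa> * (t * L)\<^sup>2 / 2 = t * (\<integral>x. f x \<partial>\<mu>) + \<kappa> * L\<^sup>2 * t\<^sup>2 / 2"
      unfolding Ig using Lp by (simp add: power_mult_distrib)
    finally show "(\<integral>\<^sup>+x. ennreal (exp (t * f x)) \<partial>\<mu>) \<le> ennreal (exp (t * (\<integral>x. f x \<partial>\<mu>) + \<kappa> * L\<^sup>2 * t\<^sup>2 / 2))" .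
  qed
qed

lemma W1_lip:
  fixes \<mu> \<nu> :: "'a::polish_space measure"
  assumes \<mu>: "\<mu> \<in> space (prob_algebra borel)" and \<nu>: "\<nu> \<in> space (prob_algebra borel)"
    and f: "f \<in> borel_measurable borel" and g: "g \<in> borel_measurable borel"
    and fi: "integrable \<mu> f" and gi: "integrable \<nu> g"
    and c: "c \<ge> 0" and W: "W \<ge> 0"
    and bound: "\<And>z1 z2. \<bar>f z1 - g z2\<bar> \<le> D + c * dist z1 z2"
    and W1: "W1 \<mu> \<nu> \<le> ennreal W"
  shows "\<bar>(\<integral>z. f z \<partial>\<mu>) - (\<integral>z. g z \<partial>\<nu>)\<bar> \<le> D + c * W"
proof -
  have key: "\<bar>(\<integral>z. f z \<partial>\<mu>) - (\<integral>z. g z \<partial>\<nu>)\<bar> \<le> D + c * w" if w: "w > W" for w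
  proof -
    have "ennreal W < ennreal w" using w W by (simp add: ennreal_less_iff)
    then have "W1 \<mu> \<nu> < ennreal w" using W1 by (rule order.strict_trans1[rotated])
    then obtain \<pi> where \<pi>: "\<pi> \<in> couplings \<mu> \<nu>"
      and lt: "(\<integral>\<^sup>+z. ennreal (dist (fst z) (snd z)) \<partial>\<pi>) < ennreal w"
      unfolding W1_def by (auto simp: INF_less_iff)
    have sp: "sets \<pi> = sets borel" and ps: "prob_space \<pi>" and m1: "distr \<pi> borel fst = \<mu>"
      and m2: "distr \<pi> borel snd = \<nu>" using \<pi> unfolding couplings_def by auto
    have fstm: "fst \<in> \<pi> \<rightarrow>\<^sub>M (borel :: 'a measure)"
      using measurable_cong_sets[OF sp refl] borel_measurable_continuous_onI[OF continuous_on_fst[OF continuous_on_id]]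
      by blast
    have sndm: "snd \<in> \<pi> \<rightarrow>\<^sub>M (borel :: 'a measure)"
      using measurable_cong_sets[OF sp refl] borel_measurable_continuous_onI[OF continuous_on_snd[OF continuous_on_id]]
      by blast
    have dm: "(\<lambda>z. dist (fst z) (snd z)) \<in> borel_measurable \<pi>"
      using fstm sndm by (rule borel_measurable_dist)
    have If: "(\<integral>z. f z \<partial>\<mu>) = (\<integral>z. f (fst z) \<partial>\<pi>)"
      using integral_distr[OF fstm f] m1 by simp
    have Ig: "(\<integral>z. g z \<partial>\<nu>) = (\<integral>z. g (snd z) \<partial>\<pi>)"
      using integral_distr[OF sndm g] m2 by simp
    have fi': "integrable \<pi> (\<lambda>z. f (fst z))"
      using integrable_distr_eq[OF fstm f] m1 fi by simp
    have gi': "integrable \<pi> (\<lambda>z. g (snd z))"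
      using integrable_distr_eq[OF sndm g] m2 gi by simp
    have di: "integrable \<pi> (\<lambda>z. dist (fst z) (snd z))"
      using dm lt by (intro integrableI_nonneg) (auto simp: less_top[symmetric] intro: order.strict_trans)
    have "ennreal (\<integral>z. dist (fst z) (snd z) \<partial>\<pi>) < ennreal w"
      using nn_integral_eq_integral[OF di] lt by simp
    then have dw: "(\<integral>z. dist (fst z) (snd z) \<partial>\<pi>) < w"
      by (subst (asm) ennreal_less_iff) (auto intro: integral_nonneg_AE)
    interpret prob_space \<pi> by (rule ps)
    have ci: "integrable \<pi> (\<lambda>z. D + c * dist (fst z) (snd z))"
      using di by simp
    have "\<bar>(\<integral>z. f z \<partial>\<mu>) - (\<integral>z. g z \<partial>\<nu>)\<bar> = \<bar>\<integral>z. f (fst z) - g (snd z) \<partial>\<pi>\<bar>"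
      unfolding If Ig using fi' gi' by simp
    also have "\<dots> \<le> (\<integral>z. \<bar>f (fst z) - g (snd z)\<bar> \<partial>\<pi>)"
      by (rule integral_abs_bound)
    also have "\<dots> \<le> (\<integral>z. D + c * dist (fst z) (snd z) \<partial>\<pi>)"
      by (rule Bochner_Integration.integral_mono) (use fi' gi' ci bound in auto)
    also have "\<dots> = D + c * (\<integral>z. dist (fst z) (snd z) \<partial>\<pi>)"
      using di by (simp add: prob_space)
    also have "\<dots> \<le> D + c * w" using dw c by (simp add: mult_left_mono)
    finally show ?thesis .
  qed
  show ?thesis
  proof (rule field_le_epsilon)
    fix e :: real assume e: "0 < e"
    have "W < W + e / (c + 1)" using e c by simp
    then have "\<bar>(\<integral>z. f z \<partial>\<mu>) - (\<integral>z. g z \<partial>\<nu>)\<bar> \<le> D + c * (W + e / (c + 1))" by (rule key)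
    also have "c * (e / (c + 1)) \<le> e" using c e by (simp add: field_simps)
    then have "D + c * (W + e / (c + 1)) \<le> D + c * W + e" by (simp add: distrib_left)
    finally show "\<bar>(\<integral>z. f z \<partial>\<mu>) - (\<integral>z. g z \<partial>\<nu>)\<bar> \<le> D + c * W + e" .
  qed
qed

lemma integral_bind_kernel:
  fixes f :: "'b \<Rightarrow> real"
  assumes K: "K \<in> M \<rightarrow>\<^sub>M subprob_algebra B" and f: "f \<in> borel_measurable B"
    and fi: "integrable (M \<bind> K) f" and fk: "\<And>x. x \<in> space M \<Longrightarrow> integrable (K x) f"
  shows "integrable M (\<lambda>x. integral\<^sup>L (K x) f) \<and> integral\<^sup>L (M \<bind> K) f = (\<integral>x. integral\<^sup>L (K x) f \<partial>M)"
proof -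
  have part: "integrable M (\<lambda>x. enn2real (\<integral>\<^sup>+y. ennreal (h y) \<partial>K x)) \<and>
      (\<integral>x. enn2real (\<integral>\<^sup>+y. ennreal (h y) \<partial>K x) \<partial>M) = enn2real (\<integral>\<^sup>+y. ennreal (h y) \<partial>(M \<bind> K))"
    if h: "h \<in> borel_measurable B" and hi: "integrable (M \<bind> K) h" and hk: "\<And>x. x \<in> space M \<Longrightarrow> integrable (K x) h"
    for h :: "'b \<Rightarrow> real"
  proof -
    have hm: "(\<lambda>y. ennreal (h y)) \<in> borel_measurable B" using h by measurable
    have nm: "(\<lambda>x. \<integral>\<^sup>+y. ennreal (h y) \<partial>K x) \<in> borel_measurable M"
      by (rule measurable_compose[OF K nn_integral_measurable_subprob_algebra[OF hm]])
    then have pm: "(\<lambda>x. enn2real (\<integral>\<^sup>+y. ennreal (h y) \<partial>K x)) \<in> borel_measurable M"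
      by measurable
    have fin: "(\<integral>\<^sup>+y. ennreal (h y) \<partial>K x) < \<infinity>" if x: "x \<in> space M" for x
      using integrableD(2)[OF hk[OF x]] by (simp add: less_top)
    have eq1: "(\<integral>\<^sup>+y. ennreal (h y) \<partial>(M \<bind> K)) = (\<integral>\<^sup>+x. \<integral>\<^sup>+y. ennreal (h y) \<partial>K x \<partial>M)"
      by (rule nn_integral_bind[OF hm K])
    have eq2: "(\<integral>\<^sup>+x. ennreal (enn2real (\<integral>\<^sup>+y. ennreal (h y) \<partial>K x)) \<partial>M) = (\<integral>\<^sup>+x. \<integral>\<^sup>+y. ennreal (h y) \<partial>K x \<partial>M)"
      by (rule nn_integral_cong) (use fin in \<open>auto simp: ennreal_enn2real_if less_top\<close>)
    have fin2: "(\<integral>\<^sup>+y. ennreal (h y) \<partial>(M \<bind> K)) < \<infinity>"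
      using integrableD(2)[OF hi] by (simp add: less_top)
    have int: "integrable M (\<lambda>x. enn2real (\<integral>\<^sup>+y. ennreal (h y) \<partial>K x))"
      by (rule integrableI_nonneg) (use pm eq1 eq2 fin2 in auto)
    have "(\<integral>x. enn2real (\<integral>\<^sup>+y. ennreal (h y) \<partial>K x) \<partial>M)
        = enn2real (\<integral>\<^sup>+x. ennreal (enn2real (\<integral>\<^sup>+y. ennreal (h y) \<partial>K x)) \<partial>M)"
      by (rule integral_eq_nn_integral) (use pm in auto)
    then show ?thesis using int eq1 eq2 by simp
  qed
  have fm: "(\<lambda>y. - f y) \<in> borel_measurable B" using f by measurable
  note P = part[OF f fi fk]
  note N = part[OF fm integrable_minus[OF fi] integrable_minus[OF fk]]
  have ieq: "integral\<^sup>L (K x) f = enn2real (\<integral>\<^sup>+y. ennreal (f y) \<partial>K x) - enn2real (\<integral>\<^sup>+y. ennreal (- f y) \<partial>K x)"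
    if x: "x \<in> space M" for x
    by (rule real_lebesgue_integral_def[OF fk[OF x]])
  have i2: "integrable M (\<lambda>x. enn2real (\<integral>\<^sup>+y. ennreal (f y) \<partial>K x) - enn2real (\<integral>\<^sup>+y. ennreal (- f y) \<partial>K x))"
    using P N by auto
  have intK: "integrable M (\<lambda>x. integral\<^sup>L (K x) f)"
  proof -
    have "integrable M (\<lambda>x. enn2real (\<integral>\<^sup>+y. ennreal (f y) \<partial>K x) - enn2real (\<integral>\<^sup>+y. ennreal (- f y) \<partial>K x))
      \<longleftrightarrow> integrable M (\<lambda>x. integral\<^sup>L (K x) f)"
      by (rule Bochner_Integration.integrable_cong) (auto simp: ieq)
    then show ?thesis using i2 by simp
  qed
  have "integral\<^sup>L (M \<bind> K) f = enn2real (\<integral>\<^sup>+y. ennreal (f y) \<partial>(M \<bind> K)) - enn2real (\<integral>\<^sup>+y. ennreal (- f y) \<partial>(M \<bind> K))"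
    by (rule real_lebesgue_integral_def[OF fi])
  also have "\<dots> = (\<integral>x. enn2real (\<integral>\<^sup>+y. ennreal (f y) \<partial>K x) - enn2real (\<integral>\<^sup>+y. ennreal (- f y) \<partial>K x) \<partial>M)"
    using P N by simp
  also have "\<dots> = (\<integral>x. integral\<^sup>L (K x) f \<partial>M)"
    by (rule Bochner_Integration.integral_cong) (auto simp: ieq)
  finally show ?thesis using intK by simp
qed

lemma sum_upd:
  fixes a :: "nat \<Rightarrow> real" and x y :: "nat \<Rightarrow> 'a::metric_space"
  shows "(\<Sum>j=1..Suc m. a j * dist ((x(Suc m := z1)) j) ((y(Suc m := z2)) j))
       = (\<Sum>j=1..m. a j * dist (x j) (y j)) + a (Suc m) * dist z1 z2"
proof -
  have "(\<Sum>j=1..m. a j * dist ((x(Suc m := z1)) j) ((y(Suc m := z2)) j)) = (\<Sum>j=1..m. a j * dist (x j) (y j))"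
    by (rule sum.cong) auto
  then show ?thesis by simp
qed

lemma main:
  fixes P1 :: "'a::polish_space measure"
    and p :: "nat \<Rightarrow> (nat \<Rightarrow> 'a) \<Rightarrow> 'a measure"
    and n :: nat and \<kappa>1 :: real and \<rho> :: "nat \<Rightarrow> real"
  assumes \<rho>0: "\<And>j. j \<in> {1..n} \<Longrightarrow> 0 \<le> \<rho> j"
    and P1: "P1 \<in> space (prob_algebra borel)"
    and p_kernel: "\<And>k. k \<in> {2..n} \<Longrightarrow> p k \<in> Xpow (k - 1) \<rightarrow>\<^sub>M prob_algebra borel"
    and GC_P1: "GC \<kappa>1 P1 dist"
    and GC_p: "\<And>k x. k \<in> {2..n} \<Longrightarrow> x \<in> space (Xpow (k - 1)) \<Longrightarrow> GC \<kappa>1 (p k x) dist"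
    and W1_p: "\<And>k x y. k \<in> {2..n} \<Longrightarrow> x \<in> space (Xpow (k - 1)) \<Longrightarrow> y \<in> space (Xpow (k - 1)) \<Longrightarrow>
                 W1 (p k x) (p k y) \<le> ennreal (\<Sum>j=1..k-1. \<rho> (k - j) * dist (x j) (y j))"
  shows "1 \<le> m \<Longrightarrow> m \<le> n \<Longrightarrow> joint P1 p m \<in> space (prob_algebra (Xpow m)) \<and>
     (\<forall>a F. (\<forall>j\<in>{1..m}. 0 \<le> a j) \<longrightarrow> F \<in> borel_measurable (Xpow m) \<longrightarrow>
        (\<forall>x\<in>space (Xpow m). \<forall>y\<in>space (Xpow m). \<bar>F x - F y\<bar> \<le> (\<Sum>j=1..m. a j * dist (x j) (y j))) \<longrightarrow>
        integrable (joint P1 p m) F \<and>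
        (\<forall>t. (\<integral>\<^sup>+x. ennreal (exp (t * F x)) \<partial>joint P1 p m)
              \<le> ennreal (exp (t * (\<integral>x. F x \<partial>joint P1 p m) + \<kappa>1 * Phi \<rho> m a * t\<^sup>2 / 2))))"
proof (induction m)
  case 0
  then show ?case by simp
next
  case (Suc m)
  show ?case
  proof (cases "m = 0")
    case True
    define emb :: "'a \<Rightarrow> nat \<Rightarrow> 'a" where "emb = (\<lambda>a. \<lambda>i\<in>{1..Suc 0}. a)"
    have P1s: "sets P1 = sets borel" and P1p: "prob_space P1" using P1 by (auto simp: space_prob_algebra)
    have embm0: "emb \<in> borel \<rightarrow>\<^sub>M Xpow (Suc 0)" unfolding emb_def
      by (rule measurable_restrict) simp
    have embm: "emb \<in> P1 \<rightarrow>\<^sub>M Xpow (Suc 0)"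
      using embm0 measurable_cong_sets[OF P1s refl] by blast
    have jeq: "joint P1 p (Suc m) = distr P1 (Xpow (Suc 0)) emb" unfolding True emb_def by simp
    have jp: "joint P1 p (Suc m) \<in> space (prob_algebra (Xpow (Suc m)))"
      unfolding jeq space_prob_algebra using prob_space.prob_space_distr[OF P1p embm] by (simp add: True)
    have rest: "integrable (joint P1 p (Suc m)) F \<and>
        (\<forall>t. (\<integral>\<^sup>+x. ennreal (exp (t * F x)) \<partial>joint P1 p (Suc m))
              \<le> ennreal (exp (t * (\<integral>x. F x \<partial>joint P1 p (Suc m)) + \<kappa>1 * Phi \<rho> (Suc m) a * t\<^sup>2 / 2)))"
      if a0: "\<forall>j\<in>{1..Suc m}. 0 \<le> a j" and Fm: "F \<in> borel_measurable (Xpow (Suc m))"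
        and Fl: "\<forall>x\<in>space (Xpow (Suc m)). \<forall>y\<in>space (Xpow (Suc m)). \<bar>F x - F y\<bar> \<le> (\<Sum>j=1..Suc m. a j * dist (x j) (y j))"
      for a F
    proof -
      have Fm': "F \<in> borel_measurable (Xpow (Suc 0))" using Fm True by simp
      define h where "h = (\<lambda>z. F (emb z))"
      have hm: "h \<in> borel_measurable P1" unfolding h_def using Fm' embm by measurable
      have emb1: "emb z (Suc 0) = z" for z unfolding emb_def by simp
      have hl: "\<forall>x\<in>space P1. \<forall>y\<in>space P1. \<bar>h x - h y\<bar> \<le> a (Suc 0) * dist x y"
      proof (intro ballI)
        fix x y assume "x \<in> space P1" "y \<in> space P1"
        have "emb x \<in> space (Xpow (Suc 0))" "emb y \<in> space (Xpow (Suc 0))"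
          using measurable_space[OF embm0] by auto
        then have "\<bar>F (emb x) - F (emb y)\<bar> \<le> (\<Sum>j=1..Suc 0. a j * dist (emb x j) (emb y j))"
          using Fl True by simp
        then show "\<bar>h x - h y\<bar> \<le> a (Suc 0) * dist x y" unfolding h_def by (simp add: emb1)
      qed
      have a1: "0 \<le> a (Suc 0)" using a0 True by simp
      note G = GC_scaled[OF GC_P1 P1p hm a1 hl]
      have ie: "integrable (joint P1 p (Suc m)) F \<longleftrightarrow> integrable P1 h"
        unfolding jeq h_def by (rule integrable_distr_eq[OF embm Fm'])
      have Ie: "(\<integral>x. F x \<partial>joint P1 p (Suc m)) = (\<integral>x. h x \<partial>P1)"
        unfolding jeq h_def by (rule integral_distr[OF embm Fm'])
      have Ne: "(\<integral>\<^sup>+x. ennreal (exp (t * F x)) \<partial>joint P1 p (Suc m)) = (\<integral>\<^sup>+x. ennreal (exp (t * h x)) \<partial>P1)" for t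
        unfolding jeq h_def by (rule nn_integral_distr[OF embm]) (use Fm' in measurable)
      have Pe: "Phi \<rho> (Suc m) a = (a (Suc 0))\<^sup>2" using True by simp
      show ?thesis using G unfolding ie Ie Ne Pe by (simp add: mult.assoc)
    qed
    show ?thesis using jp rest by blast
  next
    case False
    then have m1: "1 \<le> m" by simp
    have mn: "Suc m \<le> n" using Suc.prems by simp
    have IH: "joint P1 p m \<in> space (prob_algebra (Xpow m)) \<and>
     (\<forall>a F. (\<forall>j\<in>{1..m}. 0 \<le> a j) \<longrightarrow> F \<in> borel_measurable (Xpow m) \<longrightarrow>
        (\<forall>x\<in>space (Xpow m). \<forall>y\<in>space (Xpow m). \<bar>F x - F y\<bar> \<le> (\<Sum>j=1..m. a j * dist (x j) (y j))) \<longrightarrow>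
        integrable (joint P1 p m) F \<and>
        (\<forall>t. (\<integral>\<^sup>+x. ennreal (exp (t * F x)) \<partial>joint P1 p m)
              \<le> ennreal (exp (t * (\<integral>x. F x \<partial>joint P1 p m) + \<kappa>1 * Phi \<rho> m a * t\<^sup>2 / 2))))"
      using Suc.IH m1 mn by simp
    define J where "J = joint P1 p m"
    define K where "K = (\<lambda>x. distr (p (Suc m) x) (Xpow (Suc m)) (\<lambda>z. x(Suc m := z)))"
    obtain m' where m': "m = Suc m'" using False by (cases m) auto
    have jeq: "joint P1 p (Suc m) = J \<bind> K" unfolding J_def K_def m' by simp
    have Jp: "J \<in> space (prob_algebra (Xpow m))" using IH J_def by simp
    have Js: "sets J = sets (Xpow m)" using Jp by (simp add: space_prob_algebra)
    have Jsp: "space J = space (Xpow m)" using Js by (rule sets_eq_imp_space_eq)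
    have sk: "Suc m \<in> {2..n}" using m1 mn by simp
    have km: "p (Suc m) \<in> Xpow m \<rightarrow>\<^sub>M prob_algebra borel" using p_kernel[OF sk] by simp
    have ins: "{1..Suc m} = insert (Suc m) {1..m}" by auto
    have updm: "(\<lambda>(x, z). x(Suc m := z)) \<in> Xpow m \<Otimes>\<^sub>M borel \<rightarrow>\<^sub>M (Xpow (Suc m) :: (nat \<Rightarrow> 'a) measure)"
      unfolding ins by (rule measurable_add_dim)
    have Kpm: "K \<in> Xpow m \<rightarrow>\<^sub>M prob_algebra (Xpow (Suc m))"
      unfolding K_def by (rule measurable_distr_prob_space2[OF km updm])
    have Ksm: "K \<in> Xpow m \<rightarrow>\<^sub>M subprob_algebra (Xpow (Suc m))"
      by (rule measurable_prob_algebraD[OF Kpm])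
    have KJ: "K \<in> J \<rightarrow>\<^sub>M subprob_algebra (Xpow (Suc m))"
      using Ksm measurable_cong_sets[OF Js refl] by blast
    have jp: "joint P1 p (Suc m) \<in> space (prob_algebra (Xpow (Suc m)))"
      unfolding jeq space_prob_algebra using prob_space_bind'[OF Jp Kpm] sets_bind'[OF Jp Kpm] by simp
    have pxs: "p (Suc m) x \<in> space (prob_algebra borel)" if x: "x \<in> space (Xpow m)" for x
      using measurable_space[OF km x] .
    have pxsets: "sets (p (Suc m) x) = sets borel" if x: "x \<in> space (Xpow m)" for x
      using pxs[OF x] by (simp add: space_prob_algebra)
    have pxp: "prob_space (p (Suc m) x)" if x: "x \<in> space (Xpow m)" for x
      using pxs[OF x] by (simp add: space_prob_algebra)
    have updx0: "(\<lambda>z. x(Suc m := z)) \<in> borel \<rightarrow>\<^sub>M (Xpow (Suc m) :: (nat \<Rightarrow> 'a) measure)"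
      if x: "x \<in> space (Xpow m)" for x
    proof -
      have "fun_upd x (Suc m) \<in> borel \<rightarrow>\<^sub>M Pi\<^sub>M (insert (Suc m) {1..m}) (\<lambda>_. (borel :: 'a measure))"
        by (rule measurable_component_update[OF x]) simp
      then show ?thesis unfolding ins by simp
    qed
    have updx: "(\<lambda>z. x(Suc m := z)) \<in> p (Suc m) x \<rightarrow>\<^sub>M (Xpow (Suc m) :: (nat \<Rightarrow> 'a) measure)"
      if x: "x \<in> space (Xpow m)" for x
      using updx0[OF x] measurable_cong_sets[OF pxsets[OF x] refl] by blast
    have updsp: "x(Suc m := z) \<in> space (Xpow (Suc m))" if x: "x \<in> space (Xpow m)" for x and z :: 'a
      using measurable_space[OF updx0[OF x], of z] by simp
    have rest: "integrable (joint P1 p (Suc m)) F \<and>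
        (\<forall>t. (\<integral>\<^sup>+x. ennreal (exp (t * F x)) \<partial>joint P1 p (Suc m))
              \<le> ennreal (exp (t * (\<integral>x. F x \<partial>joint P1 p (Suc m)) + \<kappa>1 * Phi \<rho> (Suc m) a * t\<^sup>2 / 2)))"
      if a0: "\<forall>j\<in>{1..Suc m}. 0 \<le> a j" and Fm: "F \<in> borel_measurable (Xpow (Suc m))"
        and Fl: "\<forall>x\<in>space (Xpow (Suc m)). \<forall>y\<in>space (Xpow (Suc m)). \<bar>F x - F y\<bar> \<le> (\<Sum>j=1..Suc m. a j * dist (x j) (y j))"
      for a F
    proof -
      define G where "G = (\<lambda>x. \<integral>z. F (x(Suc m := z)) \<partial>p (Suc m) x)"
      define a' where "a' = (\<lambda>j. a j + a (Suc m) * \<rho> (Suc m - j))"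
      define E where "E = (\<lambda>t::real. \<kappa>1 * (a (Suc m))\<^sup>2 * t\<^sup>2 / 2)"
      have am: "0 \<le> a (Suc m)" using a0 by simp
      have fxm: "(\<lambda>z. F (x(Suc m := z))) \<in> borel_measurable borel" if x: "x \<in> space (Xpow m)" for x
        using measurable_compose[OF updx0[OF x] Fm] .
      have fxm': "(\<lambda>z. F (x(Suc m := z))) \<in> borel_measurable (p (Suc m) x)" if x: "x \<in> space (Xpow m)" for x
        using fxm[OF x] measurable_cong_sets[OF pxsets[OF x] refl] by blast
      have Fl2: "\<bar>F (x(Suc m := z1)) - F (y(Suc m := z2))\<bar> \<le> (\<Sum>j=1..m. a j * dist (x j) (y j)) + a (Suc m) * dist z1 z2"
        if x: "x \<in> space (Xpow m)" and y: "y \<in> space (Xpow m)" for x y z1 z2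
      proof -
        have "\<bar>F (x(Suc m := z1)) - F (y(Suc m := z2))\<bar> \<le> (\<Sum>j=1..Suc m. a j * dist ((x(Suc m := z1)) j) ((y(Suc m := z2)) j))"
          using Fl updsp[OF x, of z1] updsp[OF y, of z2] by blast
        then show ?thesis by (simp only: sum_upd)
      qed
      have fx: "integrable (p (Suc m) x) (\<lambda>z. F (x(Suc m := z))) \<and>
          (\<forall>t. (\<integral>\<^sup>+z. ennreal (exp (t * F (x(Suc m := z)))) \<partial>p (Suc m) x)
            \<le> ennreal (exp (t * G x + \<kappa>1 * (a (Suc m))\<^sup>2 * t\<^sup>2 / 2)))"
        if x: "x \<in> space (Xpow m)" for x
      proof -
        have "\<forall>z1\<in>space (p (Suc m) x). \<forall>z2\<in>space (p (Suc m) x).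
            \<bar>F (x(Suc m := z1)) - F (x(Suc m := z2))\<bar> \<le> a (Suc m) * dist z1 z2"
          using Fl2[OF x x] by simp
        from GC_scaled[OF GC_p[OF sk] pxp[OF x] fxm'[OF x] am this] x
        show ?thesis unfolding G_def by simp
      qed
      have Geq: "G x = integral\<^sup>L (K x) F" if x: "x \<in> space (Xpow m)" for x
        unfolding G_def K_def by (rule integral_distr[OF updx[OF x] Fm, symmetric])
      have Gm: "G \<in> borel_measurable (Xpow m)"
      proof -
        have "(\<lambda>x. integral\<^sup>L (K x) F) \<in> borel_measurable (Xpow m)"
          using measurable_compose[OF Ksm integral_measurable_subprob_algebra[OF Fm]] .
        then show ?thesis by (rule measurable_cong[THEN iffD1, rotated]) (simp add: Geq)
      qed
      have Gl: "\<forall>x\<in>space (Xpow m). \<forall>y\<in>space (Xpow m). \<bar>G x - G y\<bar> \<le> (\<Sum>j=1..m. a' j * dist (x j) (y j))"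
      proof (intro ballI)
        fix x y :: "nat \<Rightarrow> 'a" assume x: "x \<in> space (Xpow m)" and y: "y \<in> space (Xpow m)"
        have W0: "0 \<le> (\<Sum>j=1..m. \<rho> (Suc m - j) * dist (x j) (y j))"
        proof (intro sum_nonneg mult_nonneg_nonneg)
          fix j assume "j \<in> {1..m}"
          then have "Suc m - j \<in> {1..n}" using mn by auto
          then show "0 \<le> \<rho> (Suc m - j)" by (rule \<rho>0)
        qed simp
        have Wb: "W1 (p (Suc m) x) (p (Suc m) y) \<le> ennreal (\<Sum>j=1..m. \<rho> (Suc m - j) * dist (x j) (y j))"
          using W1_p[OF sk] x y by simp
        have "\<bar>G x - G y\<bar> \<le> (\<Sum>j=1..m. a j * dist (x j) (y j)) + a (Suc m) * (\<Sum>j=1..m. \<rho> (Suc m - j) * dist (x j) (y j))"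
          unfolding G_def
          by (rule W1_lip[OF pxs[OF x] pxs[OF y] fxm[OF x] fxm[OF y] conjunct1[OF fx[OF x]] conjunct1[OF fx[OF y]] am W0 _ Wb])
             (rule Fl2[OF x y])
        also have "\<dots> = (\<Sum>j=1..m. a' j * dist (x j) (y j))"
          unfolding a'_def by (simp add: sum_distrib_left sum.distrib algebra_simps)
        finally show "\<bar>G x - G y\<bar> \<le> (\<Sum>j=1..m. a' j * dist (x j) (y j))" .
      qed
      have a'0: "\<forall>j\<in>{1..m}. 0 \<le> a' j"
      proof
        fix j assume j: "j \<in> {1..m}"
        then have "Suc m - j \<in> {1..n}" using mn by auto
        then have "0 \<le> \<rho> (Suc m - j)" by (rule \<rho>0)
        then show "0 \<le> a' j" unfolding a'_def using a0 j am by simp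
      qed
      have IHG: "integrable J G \<and> (\<forall>t. (\<integral>\<^sup>+x. ennreal (exp (t * G x)) \<partial>J)
              \<le> ennreal (exp (t * (\<integral>x. G x \<partial>J) + \<kappa>1 * Phi \<rho> m a' * t\<^sup>2 / 2)))"
        using IH a'0 Gm Gl unfolding J_def by blast
      have mgf: "(\<integral>\<^sup>+y. ennreal (exp (t * F y)) \<partial>(J \<bind> K))
            \<le> ennreal (exp (t * (\<integral>x. G x \<partial>J) + \<kappa>1 * ((a (Suc m))\<^sup>2 + Phi \<rho> m a') * t\<^sup>2 / 2))" for t
      proof -
        have em: "(\<lambda>y. ennreal (exp (t * F y))) \<in> borel_measurable (Xpow (Suc m))" using Fm by measurable
        have egm: "(\<lambda>x. ennreal (exp (t * G x))) \<in> borel_measurable J"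
        proof -
          have "(\<lambda>x. ennreal (exp (t * G x))) \<in> borel_measurable (Xpow m)" using Gm by measurable
          then show ?thesis by (simp add: measurable_cong_sets[OF Js refl])
        qed
        have "(\<integral>\<^sup>+y. ennreal (exp (t * F y)) \<partial>(J \<bind> K)) = (\<integral>\<^sup>+x. \<integral>\<^sup>+y. ennreal (exp (t * F y)) \<partial>K x \<partial>J)"
          by (rule nn_integral_bind[OF em KJ])
        also have "\<dots> \<le> (\<integral>\<^sup>+x. ennreal (exp (E t)) * ennreal (exp (t * G x)) \<partial>J)"
        proof (rule nn_integral_mono)
          fix x assume "x \<in> space J"
          then have x: "x \<in> space (Xpow m)" using Jsp by simp
          have "(\<integral>\<^sup>+y. ennreal (exp (t * F y)) \<partial>K x) = (\<integral>\<^sup>+z. ennreal (exp (t * F (x(Suc m := z)))) \<partial>p (Suc m) x)"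
            unfolding K_def by (rule nn_integral_distr[OF updx[OF x]]) (use Fm in measurable)
          also have "\<dots> \<le> ennreal (exp (t * G x + \<kappa>1 * (a (Suc m))\<^sup>2 * t\<^sup>2 / 2))"
            using fx[OF x] by blast
          also have "\<dots> = ennreal (exp (E t)) * ennreal (exp (t * G x))"
            unfolding E_def by (simp add: exp_add ennreal_mult[symmetric] mult.commute)
          finally show "(\<integral>\<^sup>+y. ennreal (exp (t * F y)) \<partial>K x) \<le> ennreal (exp (E t)) * ennreal (exp (t * G x))" .
        qed
        also have "\<dots> = ennreal (exp (E t)) * (\<integral>\<^sup>+x. ennreal (exp (t * G x)) \<partial>J)"
          by (rule nn_integral_cmult[OF egm])
        also have "\<dots> \<le> ennreal (exp (E t)) * ennreal (exp (t * (\<integral>x. G x \<partial>J) + \<kappa>1 * Phi \<rho> m a' * t\<^sup>2 / 2))"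
          using IHG by (intro mult_left_mono) auto
        also have "\<dots> = ennreal (exp (t * (\<integral>x. G x \<partial>J) + \<kappa>1 * ((a (Suc m))\<^sup>2 + Phi \<rho> m a') * t\<^sup>2 / 2))"
          unfolding E_def by (simp add: exp_add[symmetric] ennreal_mult[symmetric] algebra_simps add_divide_distrib)
        finally show ?thesis .
      qed
      have intF: "integrable (J \<bind> K) F"
      proof (rule integrableI_bounded)
        show "F \<in> borel_measurable (J \<bind> K)"
          using Fm sets_bind'[OF Jp Kpm] by (simp cong: measurable_cong_sets)
        have bnd: "ennreal (norm (F y)) \<le> ennreal (exp (1 * F y)) + ennreal (exp ((-1) * F y))" for y
        proof -
          have "\<bar>F y\<bar> \<le> exp \<bar>F y\<bar>" using exp_ge_add_one_self[of "\<bar>F y\<bar>"] by linarith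
          also have "\<dots> \<le> exp (F y) + exp (- F y)" by (cases "F y \<ge> 0") auto
          finally show ?thesis by (simp add: ennreal_plus[symmetric] del: ennreal_plus)
        qed
        have "(\<integral>\<^sup>+y. ennreal (norm (F y)) \<partial>(J \<bind> K))
            \<le> (\<integral>\<^sup>+y. ennreal (exp (1 * F y)) + ennreal (exp ((-1) * F y)) \<partial>(J \<bind> K))"
          by (rule nn_integral_mono) (rule bnd)
        also have "\<dots> = (\<integral>\<^sup>+y. ennreal (exp (1 * F y)) \<partial>(J \<bind> K)) + (\<integral>\<^sup>+y. ennreal (exp ((-1) * F y)) \<partial>(J \<bind> K))"
          by (rule nn_integral_add) (use Fm sets_bind'[OF Jp Kpm] in \<open>simp_all cong: measurable_cong_sets\<close>)
        also have "\<dots> < \<infinity>"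
        proof -
          have f1: "(\<integral>\<^sup>+y. ennreal (exp (1 * F y)) \<partial>(J \<bind> K)) < \<infinity>"
            using le_less_trans[OF mgf[of 1] ennreal_less_top] by simp
          have f2: "(\<integral>\<^sup>+y. ennreal (exp ((-1) * F y)) \<partial>(J \<bind> K)) < \<infinity>"
            using le_less_trans[OF mgf[of "-1"] ennreal_less_top] by simp
          show ?thesis using f1 f2 by (simp add: infinity_ennreal_def)
        qed
        finally show "(\<integral>\<^sup>+y. ennreal (norm (F y)) \<partial>(J \<bind> K)) < \<infinity>" .
      qed
      have fk: "integrable (K x) F" if "x \<in> space J" for x
      proof -
        have x: "x \<in> space (Xpow m)" using that Jsp by simp
        show ?thesis unfolding K_def integrable_distr_eq[OF updx[OF x] Fm] using fx[OF x] by blast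
      qed
      have IFG: "(\<integral>x. F x \<partial>(J \<bind> K)) = (\<integral>x. G x \<partial>J)"
      proof -
        have "(\<integral>x. F x \<partial>(J \<bind> K)) = (\<integral>x. integral\<^sup>L (K x) F \<partial>J)"
          using integral_bind_kernel[OF KJ Fm intF fk] by simp
        also have "\<dots> = (\<integral>x. G x \<partial>J)"
          by (rule Bochner_Integration.integral_cong) (auto simp: Jsp Geq)
        finally show ?thesis .
      qed
      have Pe: "Phi \<rho> (Suc m) a = (a (Suc m))\<^sup>2 + Phi \<rho> m a'" unfolding a'_def by simp
      show ?thesis unfolding jeq Pe using intF mgf IFG by simp
    qed
    show ?thesis using jp rest by blast
  qed
qed

theorem theorem3p1:
  fixes P1 :: "'a::polish_space measure"
    and p :: "nat \<Rightarrow> (nat \<Rightarrow> 'a) \<Rightarrow> 'a measure"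
    and n :: nat and \<kappa>1 M :: real and \<rho> :: "nat \<Rightarrow> real"
  assumes n: "n \<ge> 1"
    and \<kappa>1: "\<kappa>1 > 0" and M: "M > 0"
    and \<rho>: "\<And>j. j \<in> {1..n} \<Longrightarrow> 0 \<le> \<rho> j \<and> \<rho> j \<le> M"
    and P1: "P1 \<in> space (prob_algebra borel)"
    and p_kernel: "\<And>k. k \<in> {2..n} \<Longrightarrow> p k \<in> Xpow (k - 1) \<rightarrow>\<^sub>M prob_algebra borel"
    and GC_P1: "GC \<kappa>1 P1 dist"
    and GC_p: "\<And>k x. k \<in> {2..n} \<Longrightarrow> x \<in> space (Xpow (k - 1)) \<Longrightarrow> GC \<kappa>1 (p k x) dist"
    and W1_p: "\<And>k x y. k \<in> {2..n} \<Longrightarrow> x \<in> space (Xpow (k - 1)) \<Longrightarrow> y \<in> space (Xpow (k - 1)) \<Longrightarrow>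
                 W1 (p k x) (p k y) \<le> ennreal (\<Sum>j=1..k-1. \<rho> (k - j) * dist (x j) (y j))"
  shows "GC (\<kappa>1 * (1 + M) ^ (2 * n) / M\<^sup>2) (joint P1 p n) (d1 n) \<and>
         (\<forall>R::real. (\<Sum>j=1..n. \<rho> j) \<le> R \<longrightarrow>
           GC (\<kappa>1 * (\<Sum>m=1..n. (\<Sum>k=0..m-1. R ^ k)\<^sup>2)) (joint P1 p n) (d1 n))"
proof -
  have \<rho>0: "\<And>j. j \<in> {1..n} \<Longrightarrow> 0 \<le> \<rho> j" using \<rho> by blast
  note MN = main[OF \<rho>0 P1 p_kernel GC_P1 GC_p W1_p n order.refl]
  have jp: "joint P1 p n \<in> space (prob_algebra (Xpow n))" using MN by blast
  have js: "sets (joint P1 p n) = sets (Xpow n)" using jp by (simp add: space_prob_algebra)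
  have jsp: "space (joint P1 p n) = space (Xpow n)" using js by (rule sets_eq_imp_space_eq)
  define one :: "nat \<Rightarrow> real" where "one = (\<lambda>_. 1)"
  have GCk: "GC \<kappa> (joint P1 p n) (d1 n)" if k: "\<kappa>1 * Phi \<rho> n one \<le> \<kappa>" for \<kappa>
    unfolding GC_def
  proof (intro allI impI)
    fix F :: "(nat \<Rightarrow> 'a) \<Rightarrow> real"
    assume FF: "F \<in> borel_measurable (joint P1 p n) \<and>
      (\<forall>x\<in>space (joint P1 p n). \<forall>y\<in>space (joint P1 p n). \<bar>F x - F y\<bar> \<le> d1 n x y)"
    have Fm: "F \<in> borel_measurable (Xpow n)" using FF by (simp add: measurable_cong_sets[OF js refl])
    have Fl: "\<forall>x\<in>space (Xpow n). \<forall>y\<in>space (Xpow n). \<bar>F x - F y\<bar> \<le> (\<Sum>j=1..n. one j * dist (x j) (y j))"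
      using FF unfolding jsp d1_def one_def by simp
    have o0: "\<forall>j\<in>{1..n}. 0 \<le> one j" unfolding one_def by simp
    have R: "integrable (joint P1 p n) F \<and>
        (\<forall>t. (\<integral>\<^sup>+x. ennreal (exp (t * F x)) \<partial>joint P1 p n)
              \<le> ennreal (exp (t * (\<integral>x. F x \<partial>joint P1 p n) + \<kappa>1 * Phi \<rho> n one * t\<^sup>2 / 2)))"
      using MN o0 Fm Fl by blast
    show "integrable (joint P1 p n) F \<and>
        (\<forall>t. (\<integral>\<^sup>+x. ennreal (exp (t * F x)) \<partial>joint P1 p n)
              \<le> ennreal (exp (t * (\<integral>x. F x \<partial>joint P1 p n) + \<kappa> * t\<^sup>2 / 2)))"
    proof (intro conjI allI)
      show "integrable (joint P1 p n) F" using R by blast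
      fix t :: real
      have "\<kappa>1 * Phi \<rho> n one * t\<^sup>2 \<le> \<kappa> * t\<^sup>2" using k by (intro mult_right_mono) auto
      then have "exp (t * (\<integral>x. F x \<partial>joint P1 p n) + \<kappa>1 * Phi \<rho> n one * t\<^sup>2 / 2)
          \<le> exp (t * (\<integral>x. F x \<partial>joint P1 p n) + \<kappa> * t\<^sup>2 / 2)" by simp
      then have "ennreal (exp (t * (\<integral>x. F x \<partial>joint P1 p n) + \<kappa>1 * Phi \<rho> n one * t\<^sup>2 / 2))
          \<le> ennreal (exp (t * (\<integral>x. F x \<partial>joint P1 p n) + \<kappa> * t\<^sup>2 / 2))" by (rule ennreal_leI)
      with R show "(\<integral>\<^sup>+x. ennreal (exp (t * F x)) \<partial>joint P1 p n)
              \<le> ennreal (exp (t * (\<integral>x. F x \<partial>joint P1 p n) + \<kappa> * t\<^sup>2 / 2))"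
        using order.trans by blast
    qed
  qed
  have B1: "\<kappa>1 * Phi \<rho> n one \<le> \<kappa>1 * (1 + M) ^ (2 * n) / M\<^sup>2"
  proof -
    have "Phi \<rho> n one \<le> 1\<^sup>2 * (\<Sum>i<n. (1+M)^(2*i))"
      by (rule Phi_unif) (use M \<rho> in \<open>auto simp: one_def\<close>)
    also have "\<dots> \<le> (1 + M) ^ (2 * n) / M\<^sup>2"
      using geom_bound[OF M, of n] M by (simp add: field_simps)
    finally have "\<kappa>1 * Phi \<rho> n one \<le> \<kappa>1 * ((1 + M) ^ (2 * n) / M\<^sup>2)"
      using \<kappa>1 by (intro mult_left_mono) auto
    then show ?thesis by simp
  qed
  have B2: "\<kappa>1 * Phi \<rho> n one \<le> \<kappa>1 * (\<Sum>m=1..n. (\<Sum>k=0..m-1. R ^ k)\<^sup>2)"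
    if R: "(\<Sum>j=1..n. \<rho> j) \<le> R" for R
  proof -
    have "Phi \<rho> n one \<le> (\<Sum>k=1..n. (\<Sum>i=0..n-k. R^i)\<^sup>2)"
      by (rule Phi_R[where N=n]) (use \<rho>0 R in \<open>auto simp: one_def\<close>)
    also have "\<dots> = (\<Sum>m=1..n. (\<Sum>k=0..m-1. R ^ k)\<^sup>2)"
    proof -
      have "(\<Sum>k=1..n. (\<Sum>i=0..n-k. R^i)\<^sup>2) = (\<Sum>k=1..n. (\<Sum>i=0..n-(n + 1 - k). R^i)\<^sup>2)"
        by (rule sum.atLeastAtMost_rev)
      also have "\<dots> = (\<Sum>m=1..n. (\<Sum>k=0..m-1. R ^ k)\<^sup>2)"
        by (rule sum.cong) auto
      finally show ?thesis .
    qed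
    finally show ?thesis using \<kappa>1 by (simp add: mult_left_mono)
  qed
  show ?thesis using GCk B1 B2 by blast
qed

end
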